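(* Consider the network SIS system $\dot x = (-D+B-XB)x$ on $\Xi_n$, where $B$ is irreducible, and suppose $\phi:=s(-D+B)>0$. Let $y\in\mathbb{R}^n$, $y>0$ (entrywise), satisfy $(-D+B)y=\phi y$ with $\max_i y_i=1$. For $\epsilon\in(0,1)$ define $\mathcal{M}_\epsilon=\{x\in\mathbb{R}^n:\ \epsilon y_i\le x_i\le 1\ \forall i\}$, with faces $P_i=\{x: x_i=\epsilon y_i,\ x_j\in[\epsilon y_j,1]\ \forall j\ne i\}$ and $Q_i=\{x: x_i=1,\ x_j\in[\epsilon y_j,1]\ \forall j\ne i\}$. Then there exists $\epsilon>0$ sufficiently small such that: (i) both $\mathcal{M}_\epsilon$ and its interior are positively invariant for the system; (ii) for each $i=1,\dots,n$, $-\dot x_i<0$ for all $x\in P_i$ and $\dot x_i<0$ for all $x\in Q_i$; (iii) for every $x(0)\in\partial\Xi_n\setminus\{0_n\}$ there is a finite $\bar\kappa>0$ with $x(\bar\kappa)\in\mathcal{M}_\epsilon$; and (iv) every equilibrium $x\in\Xi_n\setminus\{0_n\}$ of the system satisfies $x\in\operatorname{int}(\mathcal{M}_\epsilon)$.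
   Context: Network SIS model: $n\ge2$, $D=\operatorname{diag}(d_1,\dots,d_n)$ with $d_i>0$, $B=(b_{ij})\in\mathbb{R}^{n\times n}$ entrywise nonnegative, $X=\operatorname{diag}(x_1,\dots,x_n)$; componentwise $\dot x_i=-d_ix_i+(1-x_i)\sum_j b_{ij}x_j$. $B$ irreducible is equivalent to the associated directed graph (edge from $j$ to $i$ iff $b_{ij}\neq 0$) being strongly connected. $\Xi_n=\{x\in\mathbb{R}^n: 0\le x_i\le 1\ \forall i\}$; $\partial\Xi_n$ is its boundary. For a square matrix $M$, $s(M)$ is the largest real part of its eigenvalues. Vector inequalities are entrywise. *)

theory Defs
  imports "HOL-Analysis.Analysis"
begin

definition diag_mat :: "real^'n \<Rightarrow> real^'n^'n" where
  "diag_mat d = (\<chi> i j. if i = j then d $ i else 0)"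

definition eigenvalues_c :: "real^'n^'n \<Rightarrow> complex set" where
  "eigenvalues_c M = {z. det ((\<chi> i j. complex_of_real (M $ i $ j) - (if i = j then z else 0))
                              :: complex^'n^'n) = 0}"

definition spectral_abscissa :: "real^'n^'n \<Rightarrow> real" where
  "spectral_abscissa M = Max (Re ` eigenvalues_c M)"

text \<open>Irreducibility: the directed graph with an edge j -> i iff b_ij \<noteq> 0 is strongly connected.\<close>
definition irreducible_mat :: "real^'n^'n \<Rightarrow> bool" where
  "irreducible_mat B \<longleftrightarrow> (\<forall>i j. (j, i) \<in> {(a, b). B $ b $ a \<noteq> 0}\<^sup>*)"

definition sis_field :: "real^'n \<Rightarrow> real^'n^'n \<Rightarrow> real^'n \<Rightarrow> real^'n" where
  "sis_field d B x = (\<chi> i. - d $ i * x $ i + (1 - x $ i) * (\<Sum>j\<in>UNIV. B $ i $ j * x $ j))"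

definition sis_solution :: "real^'n \<Rightarrow> real^'n^'n \<Rightarrow> (real \<Rightarrow> real^'n) \<Rightarrow> bool" where
  "sis_solution d B x \<longleftrightarrow>
     (\<forall>t\<ge>0. (x has_vector_derivative sis_field d B (x t)) (at t within {0..}))"

definition pos_invariant :: "real^'n \<Rightarrow> real^'n^'n \<Rightarrow> (real^'n) set \<Rightarrow> bool" where
  "pos_invariant d B S \<longleftrightarrow>
     (\<forall>x. sis_solution d B x \<longrightarrow> x 0 \<in> S \<longrightarrow> (\<forall>t\<ge>0. x t \<in> S))"

definition Xi :: "(real^'n) set" where
  "Xi = {x. \<forall>i. 0 \<le> x $ i \<and> x $ i \<le> 1}"

definition M_eps :: "real \<Rightarrow> real^'n \<Rightarrow> (real^'n) set" where
  "M_eps \<epsilon> y = {x. \<forall>i. \<epsilon> * y $ i \<le> x $ i \<and> x $ i \<le> 1}"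

definition P_face :: "real \<Rightarrow> real^'n \<Rightarrow> 'n \<Rightarrow> (real^'n) set" where
  "P_face \<epsilon> y i = {x. x $ i = \<epsilon> * y $ i \<and> (\<forall>j. j \<noteq> i \<longrightarrow> \<epsilon> * y $ j \<le> x $ j \<and> x $ j \<le> 1)}"

definition Q_face :: "real \<Rightarrow> real^'n \<Rightarrow> 'n \<Rightarrow> (real^'n) set" where
  "Q_face \<epsilon> y i = {x. x $ i = 1 \<and> (\<forall>j. j \<noteq> i \<longrightarrow> \<epsilon> * y $ j \<le> x $ j \<and> x $ j \<le> 1)}"

end

theory Submission
  imports Defs
begin


lemma sol_deriv:
  assumes "sis_solution d B x" "t > 0"
  shows "((\<lambda>s. x s $ i) has_real_derivative (sis_field d B (x t) $ i)) (at t)"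
proof -
  have "(x has_vector_derivative sis_field d B (x t)) (at t within {0..})"
    using assms unfolding sis_solution_def by auto
  moreover have "at t within {0..} = at t" by (rule at_within_interior) (use assms in simp)
  ultimately have "(x has_vector_derivative sis_field d B (x t)) (at t)" by simp
  from bounded_linear.has_vector_derivative[OF bounded_linear_vec_nth this, of i]
  show ?thesis by (simp add: has_real_derivative_iff_has_vector_derivative)
qed

lemma sol_cont:
  assumes "sis_solution d B x"
  shows "continuous_on {0..} (\<lambda>s. x s $ i)"
proof -
  have "continuous_on {0..} x"
    unfolding continuous_on_eq_continuous_within
    using assms unfolding sis_solution_def
    by (auto intro: has_vector_derivative_continuous)
  then show ?thesis by (intro continuous_intros)
qed

lemma barrier:
  fixes g :: "'k::finite \<Rightarrow> real \<Rightarrow> real"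
  assumes start: "\<And>k. g k a > 0"
    and deriv: "\<And>k t. a < t \<Longrightarrow> t \<le> b \<Longrightarrow> (g k has_real_derivative g' k t) (at t)"
    and cont: "\<And>k. continuous_on {a..b} (g k)"
    and cond: "\<And>k t. a < t \<Longrightarrow> t \<le> b \<Longrightarrow> (\<forall>j. g j t \<ge> 0) \<Longrightarrow> g k t = 0 \<Longrightarrow> g' k t > 0"
    and tt: "a \<le> t" "t \<le> b"
  shows "g k t > 0"
proof (rule ccontr)
  assume neg: "\<not> g k t > 0"
  define S where "S = (\<Union>k. {a..b} \<inter> g k -` {..0})"
  have "t \<in> S" using neg tt unfolding S_def by (auto intro!: exI[of _ k])
  hence ne: "S \<noteq> {}" by auto
  have bdd: "bdd_below S" unfolding S_def by (rule bdd_belowI[of _ a]) auto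
  have cl: "closed S" unfolding S_def
    by (intro closed_Union) (auto intro!: continuous_closed_preimage cont)
  define s where "s = Inf S"
  have sS: "s \<in> S" using closed_contains_Inf[OF ne bdd cl] s_def by simp
  then obtain k0 where k0: "g k0 s \<le> 0" and s1: "a \<le> s" "s \<le> b" unfolding S_def by auto
  have below: "g j u > 0" if "a \<le> u" "u < s" for j u
  proof (rule ccontr)
    assume "\<not> g j u > 0"
    hence "u \<in> S" using that s1 unfolding S_def by (auto intro!: exI[of _ j])
    hence "s \<le> u" unfolding s_def by (rule cInf_lower[OF _ bdd])
    with that show False by simp
  qed
  have st0: "s > a" using start[of k0] k0 s1 by (cases "s = a") auto
  have nonneg: "g j s \<ge> 0" for j
  proof (rule ccontr)
    assume "\<not> g j s \<ge> 0"
    hence lt: "g j s < 0" by simp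
    have "isCont (g j) s" using deriv[OF st0 s1(2)] by (rule DERIV_isCont)
    hence "g j \<midarrow>s\<rightarrow> g j s" by (simp add: isCont_def)
    from LIM_fun_less_zero[OF this lt] obtain r where r: "r > 0"
      "\<forall>x. x \<noteq> s \<and> \<bar>s - x\<bar> < r \<longrightarrow> g j x < 0" by blast
    define u where "u = max a (s - r/2)"
    have "g j u < 0" using r st0 unfolding u_def by (intro r(2)[rule_format]) auto
    moreover have "g j u > 0" using r st0 unfolding u_def by (intro below) auto
    ultimately show False by simp
  qed
  have z: "g k0 s = 0" using nonneg[of k0] k0 by simp
  have pos: "g' k0 s > 0" using cond[OF st0 s1(2) _ z] nonneg by auto
  from DERIV_pos_inc_left[OF deriv[OF st0 s1(2)] pos] obtain dd where
    dd: "dd > 0" "\<forall>h>0. h < dd \<longrightarrow> g k0 (s - h) < g k0 s" by blast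
  define h where "h = min (dd/2) ((s - a)/2)"
  have h1: "h \<le> (s - a)/2" "h \<le> dd/2" "h > 0" using dd(1) st0 unfolding h_def by (auto simp: min_def)
  have "g k0 (s - h) < 0" using dd z h1 by auto
  moreover have "g k0 (s - h) > 0" using h1 st0 by (intro below) auto
  ultimately show False by simp
qed



lemma field_i: "sis_field d B x $ i = - d$i*x$i + (1 - x$i)*(\<Sum>j\<in>UNIV. B$i$j*x$j)"
  by (simp add: sis_field_def)

lemma eig_row:
  assumes "(B - diag_mat d) *v y = \<phi> *\<^sub>R y"
  shows "(\<Sum>j\<in>UNIV. B$i$j*y$j) = (\<phi> + d$i)*y$i"
proof -
  have "((B - diag_mat d) *v y) $ i = (\<Sum>j\<in>UNIV. B$i$j*y$j - (if i = j then d$i*y$j else 0))"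
    by (auto simp: matrix_vector_mult_def diag_mat_def left_diff_distrib intro!: sum.cong)
  also have "\<dots> = (\<Sum>j\<in>UNIV. B$i$j*y$j) - (\<Sum>j\<in>UNIV. (if i = j then d$i*y$j else 0))"
    by (rule sum_subtractf)
  also have "(\<Sum>j\<in>UNIV. (if i = j then d$i*y$j else 0)) = d$i*y$i" by simp
  finally have "((B - diag_mat d) *v y) $ i = (\<Sum>j\<in>UNIV. B$i$j*y$j) - d$i*y$i" .
  with assms have "(\<Sum>j\<in>UNIV. B$i$j*y$j) - d$i*y$i = \<phi> * y$i" by simp
  thus ?thesis by (simp add: algebra_simps)
qed

context
  fixes d :: "real^'n" and B :: "real^'n^'n" and y :: "real^'n" and \<phi> :: real
  assumes d_pos: "\<forall>i. d $ i > 0"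
    and B_nonneg: "\<forall>i j. B $ i $ j \<ge> 0"
    and phi_pos: "\<phi> > 0"
    and y_pos: "\<forall>i. y $ i > 0"
    and row: "\<forall>i. (\<Sum>j\<in>UNIV. B$i$j*y$j) = (\<phi> + d$i)*y$i"
    and y_le1: "\<forall>i. y $ i \<le> 1"
begin

lemma KI:
  assumes "x$i = c*y$i" "\<forall>j. c*y$j \<le> x$j" "c*y$i \<le> 1" "c \<ge> 0"
  shows "sis_field d B x $ i \<ge> c*y$i*(\<phi> - c*y$i*(\<phi> + d$i))"
proof -
  have "(\<Sum>j\<in>UNIV. B$i$j*x$j) \<ge> (\<Sum>j\<in>UNIV. B$i$j*(c*y$j))"
    using assms B_nonneg by (intro sum_mono mult_left_mono) auto
  also have "(\<Sum>j\<in>UNIV. B$i$j*(c*y$j)) = c*((\<phi> + d$i)*y$i)"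
  proof -
    have "(\<Sum>j\<in>UNIV. B$i$j*(c*y$j)) = c*(\<Sum>j\<in>UNIV. B$i$j*y$j)"
      by (simp add: sum_distrib_left algebra_simps)
    thus ?thesis using row by simp
  qed
  finally have s: "(\<Sum>j\<in>UNIV. B$i$j*x$j) \<ge> c*((\<phi> + d$i)*y$i)" .
  have "(1 - x$i)*(\<Sum>j\<in>UNIV. B$i$j*x$j) \<ge> (1 - x$i)*(c*((\<phi> + d$i)*y$i))"
    using s assms by (intro mult_left_mono) auto
  thus ?thesis unfolding field_i using assms(1) by (simp add: algebra_simps)
qed

lemma d_le: "d$i \<le> (\<Sum>j\<in>UNIV. d$j)"
  using d_pos by (intro member_le_sum) (auto intro: less_imp_le)

lemma lowface:
  assumes c: "0 < c" "c < \<phi>/(2*(\<phi> + (\<Sum>j\<in>UNIV. d$j)))"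
    and "x$i = c*y$i" "\<forall>j. c*y$j \<le> x$j"
  shows "sis_field d B x $ i \<ge> c*y$i*\<phi>/2"
proof -
  have Dp: "\<phi> + (\<Sum>j\<in>UNIV. d$j) > 0" using phi_pos d_pos by (simp add: add_pos_nonneg sum_nonneg less_imp_le)
  have "c*(2*(\<phi> + (\<Sum>j\<in>UNIV. d$j))) < \<phi>" using c Dp by (simp add: field_simps)
  moreover have "c*(2*(\<phi> + (\<Sum>j\<in>UNIV. d$j))) = 2*(c*(\<phi> + (\<Sum>j\<in>UNIV. d$j)))" by simp
  ultimately have c2: "c*(\<phi> + (\<Sum>j\<in>UNIV. d$j)) < \<phi>/2" by linarith
  have "c*y$i*(\<phi> + d$i) \<le> c*(\<phi> + (\<Sum>j\<in>UNIV. d$j))"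
    using c y_pos y_le1 d_pos d_le[of i] phi_pos
    by (intro mult_mono) (auto intro: mult_le_one simp: less_imp_le mult_le_cancel_left1)
  with c2 have st: "c*y$i*(\<phi> + d$i) < \<phi>/2" by simp
  have Ds: "(\<Sum>j\<in>UNIV. d$j) \<ge> 0" using d_pos by (simp add: sum_nonneg less_imp_le)
  have "c*\<phi> \<le> c*(\<phi> + (\<Sum>j\<in>UNIV. d$j))" using c Ds by (intro mult_left_mono) auto
  with c2 have "c*\<phi> < \<phi>/2" by linarith
  hence "c*\<phi> < 1*\<phi>" using phi_pos by linarith
  hence c1: "c \<le> 1" using phi_pos by (simp add: mult_less_cancel_right)
  have "c*y$i \<le> 1" using c1 c y_le1 y_pos by (simp add: mult_le_one less_imp_le)
  from KI[OF assms(3,4) this] c have "sis_field d B x $ i \<ge> c*y$i*(\<phi> - c*y$i*(\<phi> + d$i))" by simp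
  moreover have "c*y$i*(\<phi> - c*y$i*(\<phi> + d$i)) \<ge> c*y$i*(\<phi>/2)"
    using st c y_pos by (intro mult_left_mono) (auto simp: less_imp_le)
  ultimately show ?thesis by simp
qed

lemma upface:
  assumes "u \<ge> 1" "x$i = u" "\<forall>j. 0 \<le> x$j"
  shows "sis_field d B x $ i \<le> - d$i*u"
proof -
  have "(\<Sum>j\<in>UNIV. B$i$j*x$j) \<ge> 0" using assms B_nonneg by (intro sum_nonneg) auto
  hence "(1 - u)*(\<Sum>j\<in>UNIV. B$i$j*x$j) \<le> 0" using assms by (simp add: mult_nonpos_nonneg)
  thus ?thesis unfolding field_i using assms by simp
qed

end


context
  fixes d :: "real^'n" and B :: "real^'n^'n" and y :: "real^'n" and \<phi> :: real
  assumes d_pos: "\<forall>i. d $ i > 0"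
    and B_nonneg: "\<forall>i j. B $ i $ j \<ge> 0"
    and phi_pos: "\<phi> > 0"
    and y_pos: "\<forall>i. y $ i > 0"
    and row: "\<forall>i. (\<Sum>j\<in>UNIV. B$i$j*y$j) = (\<phi> + d$i)*y$i"
    and y_le1: "\<forall>i. y $ i \<le> 1"
begin

lemmas ctx = d_pos B_nonneg phi_pos y_pos row y_le1

lemma box_inv:
  assumes c: "0 < c" "c < \<phi>/(2*(\<phi> + (\<Sum>j\<in>UNIV. d$j)))" and u: "u \<ge> 1"
    and sol: "sis_solution d B x"
    and x0: "\<forall>i. c*y$i < x 0 $ i \<and> x 0 $ i < u" and t: "t \<ge> 0"
  shows "c*y$i < x t $ i \<and> x t $ i < u"
proof -
  define g :: "bool \<times> 'n \<Rightarrow> real \<Rightarrow> real" where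
    "g k = (if fst k then (\<lambda>s. x s $ snd k - c*y$snd k) else (\<lambda>s. u - x s $ snd k))" for k
  define g' where "g' k s = (if fst k then sis_field d B (x s) $ snd k else - sis_field d B (x s) $ snd k)"
    for k :: "bool \<times> 'n" and s
  have main: "g k t > 0" for k
  proof (rule barrier[where a=0 and b=t and g=g and g'=g'])
    show "g k 0 > 0" for k using x0 by (cases "fst k") (auto simp: g_def)
    show "(g k has_real_derivative g' k s) (at s)" if "0 < s" "s \<le> t" for k s
    proof -
      have D: "((\<lambda>s. x s $ snd k) has_real_derivative sis_field d B (x s) $ snd k) (at s)"
        using sol_deriv[OF sol that(1)] .
      show ?thesis
      proof (cases "fst k")
        case True
        from DERIV_diff[OF D DERIV_const[of "c*y$snd k"]] True show ?thesis by (simp add: g_def g'_def)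
      next
        case False
        from DERIV_diff[OF DERIV_const[of u] D] False show ?thesis by (simp add: g_def g'_def)
      qed
    qed
    show "continuous_on {0..t} (g k)" for k
      using continuous_on_subset[OF sol_cont[OF sol, of "snd k"], of "{0..t}"]
      by (cases "fst k") (auto simp: g_def intro!: continuous_intros)
    show "g' k s > 0" if "0 < s" "s \<le> t" "\<forall>j. g j s \<ge> 0" "g k s = 0" for k s
    proof -
      obtain b i where k: "k = (b, i)" by (cases k)
      have lo: "c*y$j \<le> x s $ j" and hi: "x s $ j \<le> u" for j
        using that(3)[rule_format, of "(True, j)"] that(3)[rule_format, of "(False, j)"] by (auto simp: g_def)
      show ?thesis
      proof (cases b)
        case True
        hence eq: "x s $ i = c*y$i" using that(4) k by (simp add: g_def)
        have "sis_field d B (x s) $ i \<ge> c*y$i*\<phi>/2"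
          using lowface[OF ctx c eq] lo by auto
        moreover have "c*y$i*\<phi>/2 > 0" using c y_pos phi_pos by simp
        ultimately show ?thesis using True k by (simp add: g'_def)
      next
        case False
        hence eq: "x s $ i = u" using that(4) k by (simp add: g_def)
        have nn: "\<forall>j. 0 \<le> x s $ j" using lo c y_pos by (meson less_imp_le mult_pos_pos order_trans)
        have "sis_field d B (x s) $ i \<le> - d$i*u" using upface[OF ctx u eq nn] .
        moreover have "d$i*u > 0" using d_pos u by simp
        ultimately show ?thesis using False k by (simp add: g'_def)
      qed
    qed
  qed (use t in auto)
  show ?thesis using main[of "(True,i)"] main[of "(False,i)"] by (simp add: g_def)
qed


lemma xi_barrier:
  assumes sol: "sis_solution d B x" and x0: "x 0 \<in> Xi"
    and dl: "\<delta> > 0" "\<delta> * exp ((2*(\<Sum>i\<in>UNIV. \<Sum>j\<in>UNIV. B$i$j) + 1) * T) \<le> 1"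
    and t: "0 \<le> t" "t \<le> T"
  shows "- (\<delta> * exp ((2*(\<Sum>i\<in>UNIV. \<Sum>j\<in>UNIV. B$i$j) + 1) * t)) < x t $ i
     \<and> x t $ i < 1 + \<delta> * exp ((2*(\<Sum>i\<in>UNIV. \<Sum>j\<in>UNIV. B$i$j) + 1) * t)"
proof -
  define R where "R = (\<Sum>i\<in>UNIV. \<Sum>j\<in>UNIV. B$i$j)"
  define K where "K = 2*R + 1"
  define cf where "cf s = \<delta> * exp (K * s)" for s
  have Rnn: "(\<Sum>j\<in>UNIV. B$i$j) \<le> R" for i
    unfolding R_def using B_nonneg by (intro member_le_sum) (auto intro: sum_nonneg)
  have R0: "R \<ge> 0" unfolding R_def using B_nonneg by (intro sum_nonneg) auto
  have cfd: "(cf has_real_derivative K * cf s) (at s)" for s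
    unfolding cf_def by (auto intro!: derivative_eq_intros)
  have cfpos: "cf s > 0" for s using dl unfolding cf_def by simp
  have cfle: "cf s \<le> 1" if "s \<le> T" for s
  proof -
    have "exp (K * s) \<le> exp (K * T)" using that R0 unfolding K_def by (simp add: mult_left_mono)
    hence "cf s \<le> \<delta> * exp (K * T)" unfolding cf_def using dl by simp
    thus ?thesis using dl unfolding K_def R_def by simp
  qed
  define g :: "bool \<times> 'n \<Rightarrow> real \<Rightarrow> real" where
    "g k = (if fst k then (\<lambda>s. x s $ snd k + cf s) else (\<lambda>s. 1 + cf s - x s $ snd k))" for k
  define g' where "g' k s = (if fst k then sis_field d B (x s) $ snd k + K * cf s
      else K * cf s - sis_field d B (x s) $ snd k)"
    for k :: "bool \<times> 'n" and s
  have main: "g k t > 0" for k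
  proof (rule barrier[where a=0 and b=T and g=g and g'=g'])
    show "g k 0 > 0" for k
    proof -
      have "0 \<le> x 0 $ snd k" "x 0 $ snd k \<le> 1" using x0 by (auto simp: Xi_def)
      thus ?thesis using cfpos[of 0] by (auto simp: g_def)
    qed
    show "(g k has_real_derivative g' k s) (at s)" if "0 < s" "s \<le> T" for k s
    proof -
      have D: "((\<lambda>s. x s $ snd k) has_real_derivative sis_field d B (x s) $ snd k) (at s)"
        using sol_deriv[OF sol that(1)] .
      show ?thesis
      proof (cases "fst k")
        case True
        from DERIV_add[OF D cfd[of s]] True show ?thesis by (simp add: g_def g'_def)
      next
        case False
        from DERIV_diff[OF DERIV_add[OF DERIV_const[of 1] cfd[of s]] D] False
        show ?thesis by (simp add: g_def g'_def)
      qed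
    qed
    have cfo: "continuous_on {0..T} cf" unfolding cf_def by (intro continuous_intros)
    show "continuous_on {0..T} (g k)" for k
      using continuous_on_subset[OF sol_cont[OF sol, of "snd k"], of "{0..T}"] cfo
      by (cases "fst k") (auto simp: g_def intro!: continuous_intros)
    show "g' k s > 0" if "0 < s" "s \<le> T" "\<forall>j. g j s \<ge> 0" "g k s = 0" for k s
    proof -
      obtain b i where k: "k = (b, i)" by (cases k)
      let ?c = "cf s"
      have c0: "?c > 0" and c1: "?c \<le> 1" using cfpos cfle that(2) by auto
      have lo: "- ?c \<le> x s $ j" and hi: "x s $ j \<le> 1 + ?c" for j
        using that(3)[rule_format, of "(True, j)"] that(3)[rule_format, of "(False, j)"] by (auto simp: g_def)
      have "(\<Sum>j\<in>UNIV. B$i$j*x s$j) \<ge> (\<Sum>j\<in>UNIV. B$i$j*(- ?c))"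
        using lo B_nonneg by (intro sum_mono mult_left_mono) auto
      also have "(\<Sum>j\<in>UNIV. B$i$j*(- ?c)) = - ?c * (\<Sum>j\<in>UNIV. B$i$j)"
        by (simp add: sum_distrib_left algebra_simps)
      also have "- ?c * (\<Sum>j\<in>UNIV. B$i$j) \<ge> - ?c * R" using Rnn[of i] c0 by simp
      finally have S: "(\<Sum>j\<in>UNIV. B$i$j*x s$j) \<ge> - ?c * R" .
      have cR: "?c * R \<ge> 0" using c0 R0 by simp
      show ?thesis
      proof (cases b)
        case True
        hence eq: "x s $ i = - ?c" using that(4) k by (simp add: g_def)
        have f: "sis_field d B (x s) $ i = d$i * ?c + (1 + ?c) * (\<Sum>j\<in>UNIV. B$i$j*x s$j)"
          unfolding field_i eq by simp
        have "(1 + ?c) * (\<Sum>j\<in>UNIV. B$i$j*x s$j) \<ge> (1 + ?c) * (- ?c * R)"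
          using S c0 by (intro mult_left_mono) auto
        moreover have "(1 + ?c) * (?c * R) \<le> 2 * (?c * R)" using c1 cR by (intro mult_right_mono) auto
        moreover have "d$i * ?c > 0" using d_pos c0 by simp
        ultimately have "sis_field d B (x s) $ i \<ge> - 2 * (?c * R)" unfolding f by (simp add: algebra_simps)
        moreover have "K * ?c = 2 * (?c * R) + ?c" unfolding K_def by (simp add: algebra_simps)
        ultimately show ?thesis using True k c0 by (simp add: g'_def)
      next
        case False
        hence eq: "x s $ i = 1 + ?c" using that(4) k by (simp add: g_def)
        have f: "sis_field d B (x s) $ i = - d$i * (1 + ?c) - ?c * (\<Sum>j\<in>UNIV. B$i$j*x s$j)"
          unfolding field_i eq by simp
        have "?c * (\<Sum>j\<in>UNIV. B$i$j*x s$j) \<ge> ?c * (- ?c * R)"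
          using S c0 by (intro mult_left_mono) auto
        moreover have "?c * (?c * R) \<le> 1 * (?c * R)" using c1 cR by (intro mult_right_mono) auto
        moreover have "d$i * (1 + ?c) > 0" using d_pos c0 by simp
        ultimately have "sis_field d B (x s) $ i < ?c * R" unfolding f by (simp add: algebra_simps)
        moreover have "K * ?c = 2 * (?c * R) + ?c" unfolding K_def by (simp add: algebra_simps)
        ultimately show ?thesis using False k c0 cR by (simp add: g'_def)
      qed
    qed
  qed (use t in auto)
  show ?thesis using main[of "(True,i)"] main[of "(False,i)"]
    by (simp add: g_def cf_def K_def R_def)
qed

lemma xi_inv:
  assumes sol: "sis_solution d B x" and x0: "x 0 \<in> Xi" and t: "t \<ge> 0"
  shows "x t \<in> Xi"
proof -
  define K where "K = 2*(\<Sum>i\<in>UNIV. \<Sum>j\<in>UNIV. B$i$j) + 1"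
  have K0: "K \<ge> 0" unfolding K_def using B_nonneg by (simp add: sum_nonneg add_nonneg_pos less_imp_le)
  have bnd: "- (\<delta> * exp (K * t)) < x t $ i \<and> x t $ i < 1 + \<delta> * exp (K * t)"
    if "\<delta> > 0" "\<delta> \<le> exp (-(K * t))" for \<delta> i
  proof -
    have "\<delta> * exp (K * t) \<le> exp (-(K * t)) * exp (K * t)" using that by (intro mult_right_mono) auto
    also have "\<dots> = 1" by (simp add: exp_minus field_simps)
    finally show ?thesis using xi_barrier[OF sol x0 that(1) _ t order_refl] unfolding K_def by blast
  qed
  have "0 \<le> x t $ i \<and> x t $ i \<le> 1" for i
  proof (rule ccontr)
    assume "\<not> (0 \<le> x t $ i \<and> x t $ i \<le> 1)"
    hence "x t $ i < 0 \<or> x t $ i > 1" by auto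
    thus False
    proof
      assume neg: "x t $ i < 0"
      define \<delta> where "\<delta> = min (exp (-(K * t))) (- x t $ i / exp (K * t))"
      have dp: "\<delta> > 0" using neg unfolding \<delta>_def by (simp add: divide_neg_pos)
      have "\<delta> * exp (K * t) \<le> - x t $ i / exp (K * t) * exp (K * t)" unfolding \<delta>_def by (intro mult_right_mono) auto
      hence dm: "\<delta> * exp (K * t) \<le> - x t $ i" by simp
      have "\<delta> \<le> exp (-(K * t))" unfolding \<delta>_def by simp
      from bnd[OF dp this, of i] dm show False by linarith
    next
      assume pos: "x t $ i > 1"
      define \<delta> where "\<delta> = min (exp (-(K * t))) ((x t $ i - 1) / exp (K * t))"
      have dp: "\<delta> > 0" using pos unfolding \<delta>_def by simp
      have "\<delta> * exp (K * t) \<le> (x t $ i - 1) / exp (K * t) * exp (K * t)" unfolding \<delta>_def by (intro mult_right_mono) auto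
      hence dm: "\<delta> * exp (K * t) \<le> x t $ i - 1" by simp
      have "\<delta> \<le> exp (-(K * t))" unfolding \<delta>_def by simp
      from bnd[OF dp this, of i] dm show False by linarith
    qed
  qed
  thus ?thesis by (simp add: Xi_def)
qed

end


lemma irr_edge:
  assumes irr: "irreducible_mat B" and "j \<in> P" "i \<notin> P"
  shows "\<exists>a\<in>P. \<exists>b. b \<notin> P \<and> B$b$a \<noteq> 0"
proof (rule ccontr)
  assume no: "\<not> (\<exists>a\<in>P. \<exists>b. b \<notin> P \<and> B$b$a \<noteq> 0)"
  have "(j,i) \<in> {(a,b). B$b$a \<noteq> 0}\<^sup>*" using irr unfolding irreducible_mat_def by blast
  then have "i \<in> P" using assms(2)
    by (induction rule: rtrancl_induct) (use no in auto)
  with assms(3) show False by simp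
qed

context
  fixes d :: "real^'n" and B :: "real^'n^'n" and y :: "real^'n" and \<phi> :: real
  assumes d_pos: "\<forall>i. d $ i > 0"
    and B_nonneg: "\<forall>i j. B $ i $ j \<ge> 0"
    and phi_pos: "\<phi> > 0"
    and y_pos: "\<forall>i. y $ i > 0"
    and row: "\<forall>i. (\<Sum>j\<in>UNIV. B$i$j*y$j) = (\<phi> + d$i)*y$i"
    and y_le1: "\<forall>i. y $ i \<le> 1"
begin

lemmas ctxD = d_pos B_nonneg phi_pos y_pos row y_le1

lemma field_ge_xi:
  assumes "x \<in> Xi" shows "sis_field d B x $ i \<ge> - d$i * x$i"
proof -
  have "(\<Sum>j\<in>UNIV. B$i$j*x$j) \<ge> 0" using assms B_nonneg by (intro sum_nonneg) (auto simp: Xi_def)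
  moreover have "1 - x$i \<ge> 0" using assms by (auto simp: Xi_def)
  ultimately show ?thesis unfolding field_i by simp
qed

lemma sum_ge_term:
  assumes "x \<in> Xi" shows "(\<Sum>j\<in>UNIV. B$i$j*x$j) \<ge> B$i$a * x$a"
  using assms B_nonneg by (intro member_le_sum) (auto simp: Xi_def)

lemma pos_persist:
  assumes sol: "sis_solution d B x" and x0: "x 0 \<in> Xi" and t: "0 \<le> t" "t \<le> t'"
    and p: "x t $ i > 0"
  shows "x t' $ i > 0"
proof -
  define w where "w s = exp (d$i * s) * x s $ i" for s
  have "w t \<le> w t'"
  proof (rule DERIV_nonneg_imp_increasing_open[OF t(2)])
    fix s assume s: "t < s" "s < t'"
    have D: "((\<lambda>s. x s $ i) has_real_derivative sis_field d B (x s) $ i) (at s)"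
      using sol_deriv[OF sol, of s] s t by simp
    have "(w has_real_derivative exp (d$i * s) * d$i * x s $ i + exp (d$i * s) * sis_field d B (x s) $ i) (at s)"
      unfolding w_def by (auto intro!: derivative_eq_intros D)
    moreover have "exp (d$i * s) * d$i * x s $ i + exp (d$i * s) * sis_field d B (x s) $ i \<ge> 0"
    proof -
      have "sis_field d B (x s) $ i \<ge> - d$i * x s $ i"
      proof -
        have "x s \<in> Xi" using xi_inv[OF ctxD sol x0, of s] s t by simp
        thus ?thesis by (rule field_ge_xi)
      qed
      hence "exp (d$i * s) * sis_field d B (x s) $ i \<ge> exp (d$i * s) * (- d$i * x s $ i)"
        by (intro mult_left_mono) auto
      thus ?thesis by (simp add: algebra_simps)
    qed
    ultimately show "\<exists>y. (w has_real_derivative y) (at s) \<and> 0 \<le> y" by blast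
  next
    show "continuous_on {t..t'} w"
      unfolding w_def using t
      by (intro continuous_intros continuous_on_subset[OF sol_cont[OF sol]]) auto
  qed
  hence "exp (d$i * t') * x t' $ i \<ge> exp (d$i * t) * x t $ i" by (simp add: w_def)
  moreover have "exp (d$i * t) * x t $ i > 0" using p by simp
  ultimately have "exp (d$i * t') * x t' $ i > 0" by linarith
  thus ?thesis by (simp add: zero_less_mult_iff)
qed


lemma spread:
  assumes irr: "irreducible_mat B" and sol: "sis_solution d B x" and x0: "x 0 \<in> Xi" and nz: "x 0 \<noteq> 0"
  shows "\<exists>t>0. \<forall>i. x t $ i > 0"
proof -
  have xi: "x s \<in> Xi" if "s \<ge> 0" for s using xi_inv[OF ctxD sol x0 that] .
  obtain i0 where "x 0 $ i0 \<noteq> 0" using nz by (auto simp: vec_eq_iff)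
  hence "x 0 $ i0 > 0" using x0 by (auto simp: Xi_def less_le)
  hence i0: "x s $ i0 > 0" if "s \<ge> 0" for s using pos_persist[OF sol x0 _ that] by simp
  define P where "P t = {i. x t $ i > 0}" for t
  have step: "\<forall>m. m \<le> CARD('n) \<longrightarrow> (\<exists>t\<ge>1. m \<le> card (P t))"
  proof
    fix m show "m \<le> CARD('n) \<longrightarrow> (\<exists>t\<ge>1. m \<le> card (P t))"
    proof (induction m)
      case 0 show ?case by (auto intro!: exI[of _ 1])
    next
      case (Suc m)
      show ?case
      proof
        assume sm: "Suc m \<le> CARD('n)"
        then obtain t where t: "t \<ge> 1" "m \<le> card (P t)" using Suc.IH by auto
        show "\<exists>t\<ge>1. Suc m \<le> card (P t)"
        proof (cases "Suc m \<le> card (P t)")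
          case True thus ?thesis using t by auto
        next
          case False
          hence "card (P t) < CARD('n)" using sm t by simp
          hence "P t \<noteq> UNIV" by auto
          then obtain b0 where "b0 \<notin> P t" by auto
          moreover have "i0 \<in> P t" using i0 t unfolding P_def by simp
          ultimately obtain a b where ab: "a \<in> P t" "b \<notin> P t" "B$b$a \<noteq> 0"
            using irr_edge[OF irr] by blast
          have xa: "x t $ a > 0" using ab unfolding P_def by simp
          have "0 \<le> x t $ b" using xi[of t] t by (auto simp: Xi_def)
          hence xb: "x t $ b = 0" using ab unfolding P_def by simp
          have Bp: "B$b$a > 0" using ab B_nonneg by (simp add: less_le)
          have "sis_field d B (x t) $ b = (\<Sum>j\<in>UNIV. B$b$j*x t$j)" unfolding field_i xb by simp
          also have "\<dots> \<ge> B$b$a * x t $ a" using sum_ge_term[OF xi[of t]] t by simp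
          finally have fpos: "sis_field d B (x t) $ b > 0" using Bp xa
            by (meson mult_pos_pos order_less_le_trans)
          from DERIV_pos_inc_right[OF sol_deriv[OF sol, of t b] fpos] t obtain dd where
            dd: "dd > 0" "\<forall>h>0. h < dd \<longrightarrow> x t $ b < x (t + h) $ b" by auto
          define t' where "t' = t + dd/2"
          have b': "x t' $ b > 0" using dd xb unfolding t'_def by auto
          have sub: "P t \<subseteq> P t'" unfolding P_def t'_def
            using pos_persist[OF sol x0, of t] t dd by auto
          have "insert b (P t) \<subseteq> P t'" using sub b' unfolding P_def by auto
          hence "card (insert b (P t)) \<le> card (P t')" by (intro card_mono) auto
          moreover have "card (insert b (P t)) = Suc (card (P t))" using ab by simp
          ultimately have "Suc m \<le> card (P t')" using t by simp
          moreover have "t' \<ge> 1" using t dd unfolding t'_def by simp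
          ultimately show ?thesis by blast
        qed
      qed
    qed
  qed
  then obtain t where t: "t \<ge> 1" "CARD('n) \<le> card (P t)" by auto
  have "P t = UNIV" using t by (intro card_seteq) auto
  thus ?thesis using t unfolding P_def by (intro exI[of _ t]) auto
qed


lemma reach:
  assumes irr: "irreducible_mat B" and sol: "sis_solution d B x" and x0: "x 0 \<in> Xi" and nz: "x 0 \<noteq> 0"
    and e: "0 < \<epsilon>" "\<epsilon> < \<phi>/(2*(\<phi> + (\<Sum>j\<in>UNIV. d$j)))"
  shows "\<exists>\<kappa>>0. x \<kappa> \<in> M_eps \<epsilon> y"
proof -
  have xi: "x s \<in> Xi" if "s \<ge> 0" for s using xi_inv[OF ctxD sol x0 that] .
  obtain t1 where t1: "t1 > 0" "\<forall>i. x t1 $ i > 0" using spread[OF irr sol x0 nz] by auto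
  define v where "v = Min (range (\<lambda>i. x t1 $ i / y$i))"
  have vle: "v \<le> x t1 $ i / y$i" for i unfolding v_def by (intro Min_le) auto
  have vpos: "v > 0" unfolding v_def using t1 y_pos by (subst Min_gr_iff) auto
  define a where "a = min (\<epsilon>/2) (v/2)"
  have a: "0 < a" "a < \<epsilon>" "a < v" using e vpos unfolding a_def by auto
  define lam where "lam = \<phi>/4"
  have lam: "lam > 0" using phi_pos unfolding lam_def by simp
  define T where "T = t1 + ln (\<epsilon>/a) / lam"
  have lnp: "ln (\<epsilon>/a) > 0" using a by simp
  have T: "T > t1" unfolding T_def using lnp lam by simp
  define cf where "cf s = a * exp (lam * (s - t1))" for s
  have cfpos: "cf s > 0" for s using a unfolding cf_def by simp
  have cfT: "cf T = \<epsilon>" unfolding cf_def T_def using a lam e by simp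
  have cfle: "cf s \<le> \<epsilon>" if "s \<le> T" for s
  proof -
    have "exp (lam * (s - t1)) \<le> exp (lam * (T - t1))" using that lam by (simp add: mult_left_mono)
    hence "cf s \<le> cf T" unfolding cf_def using a by simp
    thus ?thesis using cfT by simp
  qed
  have cfd: "(cf has_real_derivative lam * cf s) (at s)" for s
    unfolding cf_def by (auto intro!: derivative_eq_intros)
  define g where "g i s = x s $ i - cf s * y$i" for i s
  define g' where "g' i s = sis_field d B (x s) $ i - lam * cf s * y$i" for i s
  have main: "g i T > 0" for i
  proof (rule barrier[where a=t1 and b=T and g=g and g'=g'])
    show "g i t1 > 0" for i
    proof -
      have "a * y$i < v * y$i" using a y_pos by simp
      also have "v * y$i \<le> x t1 $ i" using vle[of i] y_pos by (simp add: pos_le_divide_eq)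
      finally show ?thesis unfolding g_def cf_def by simp
    qed
    show "(g i has_real_derivative g' i s) (at s)" if "t1 < s" "s \<le> T" for i s
    proof -
      have D: "((\<lambda>s. x s $ i) has_real_derivative sis_field d B (x s) $ i) (at s)"
        using sol_deriv[OF sol, of s i] that t1 by simp
      from DERIV_diff[OF D DERIV_mult[OF cfd[of s] DERIV_const[of "y$i"]]]
      show ?thesis unfolding g_def[abs_def] g'_def by simp
    qed
    have cfo: "continuous_on {t1..T} cf" unfolding cf_def by (intro continuous_intros)
    show "continuous_on {t1..T} (g i)" for i
      unfolding g_def[abs_def] using t1 cfo
      by (intro continuous_intros continuous_on_subset[OF sol_cont[OF sol]]) auto
    show "g' i s > 0" if "t1 < s" "s \<le> T" "\<forall>j. g j s \<ge> 0" "g i s = 0" for i s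
    proof -
      have lo: "\<forall>j. cf s * y$j \<le> x s $ j" using that(3) unfolding g_def by auto
      have eq: "x s $ i = cf s * y$i" using that(4) unfolding g_def by simp
      have "cf s < \<phi>/(2*(\<phi> + (\<Sum>j\<in>UNIV. d$j)))" using cfle[OF that(2)] e by simp
      from lowface[OF ctxD cfpos this eq lo]
      have "sis_field d B (x s) $ i \<ge> cf s * y$i * \<phi>/2" .
      moreover have "lam * cf s * y$i < cf s * y$i * \<phi>/2"
        using cfpos[of s] y_pos phi_pos unfolding lam_def by (simp add: field_simps)
      ultimately show ?thesis unfolding g'_def by simp
    qed
  qed (use T in auto)
  have "x T \<in> M_eps \<epsilon> y"
    unfolding M_eps_def using main cfT xi[of T] T t1 by (auto simp: g_def Xi_def less_imp_le)
  thus ?thesis using T t1 by (intro exI[of _ T]) auto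
qed

lemma M_eps_cbox: "M_eps \<epsilon> y = cbox (\<epsilon> *\<^sub>R y) 1"
  by (auto simp: M_eps_def mem_box_cart)

lemma int_M_eps: "interior (M_eps \<epsilon> y) = {x. \<forall>i. \<epsilon> * y$i < x$i \<and> x$i < 1}"
  unfolding M_eps_cbox interior_cbox by (auto simp: mem_box_cart)

lemma equil:
  assumes irr: "irreducible_mat B" and x: "x \<in> Xi" "x \<noteq> 0" "sis_field d B x = 0"
    and e: "0 < \<epsilon>" "\<epsilon> < \<phi>/(2*(\<phi> + (\<Sum>j\<in>UNIV. d$j)))"
  shows "x \<in> interior (M_eps \<epsilon> y)"
proof -
  have f0: "sis_field d B x $ i = 0" for i using x(3) by simp
  have x01: "0 \<le> x$i" "x$i \<le> 1" for i using x(1) by (auto simp: Xi_def)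
  have lt1: "x$i < 1" for i
  proof (rule ccontr)
    assume "\<not> x$i < 1"
    hence "x$i = 1" using x01[of i] by simp
    hence "sis_field d B x $ i = - d$i" unfolding field_i by simp
    thus False using f0[of i] d_pos[rule_format, of i] by linarith
  qed
  have pos: "x$i > 0" for i
  proof (rule ccontr)
    assume "\<not> x$i > 0"
    hence ni: "i \<notin> {i. x$i > 0}" by simp
    obtain i0 where "x$i0 \<noteq> 0" using x(2) by (auto simp: vec_eq_iff)
    hence "i0 \<in> {i. x$i > 0}" using x01[of i0] by (simp add: less_le)
    from irr_edge[OF irr this ni] obtain a b where ab: "x$a > 0" "\<not> x$b > 0" "B$b$a \<noteq> 0"
      by auto
    have xb: "x$b = 0" using ab x01[of b] by simp
    have Bp: "B$b$a > 0" using ab B_nonneg by (simp add: less_le)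
    have "sis_field d B x $ b = (\<Sum>j\<in>UNIV. B$b$j*x$j)" unfolding field_i xb by simp
    also have "\<dots> \<ge> B$b$a * x$a" using sum_ge_term[OF x(1)] by simp
    finally have "sis_field d B x $ b > 0" using Bp ab by (meson mult_pos_pos order_less_le_trans)
    thus False using f0 by simp
  qed
  define c where "c = Min (range (\<lambda>i. x$i / y$i))"
  have "c \<in> range (\<lambda>i. x$i / y$i)" unfolding c_def by (rule Min_in) auto
  then obtain i where ci: "c = x$i / y$i" by auto
  have cle: "c \<le> x$j / y$j" for j unfolding c_def by (intro Min_le) auto
  have cpos: "c > 0" using ci pos y_pos by simp
  have "c > \<epsilon>"
  proof (rule ccontr)
    assume "\<not> c > \<epsilon>"
    hence "c < \<phi>/(2*(\<phi> + (\<Sum>j\<in>UNIV. d$j)))" using e by simp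
    moreover have "x$i = c * y$i" using ci y_pos by (simp add: less_imp_neq[symmetric])
    moreover have "\<forall>j. c * y$j \<le> x$j" using cle y_pos by (simp add: pos_le_divide_eq)
    ultimately have "sis_field d B x $ i \<ge> c*y$i*\<phi>/2" using lowface[OF ctxD cpos] by blast
    moreover have "c*y$i*\<phi>/2 > 0" using cpos y_pos phi_pos by simp
    ultimately show False using f0 by simp
  qed
  have "\<epsilon> * y$j < x$j" for j
  proof -
    have "\<epsilon> < x$j / y$j" using cle[of j] \<open>c > \<epsilon>\<close> by linarith
    thus ?thesis using y_pos by (simp add: pos_less_divide_eq)
  qed
  thus ?thesis unfolding int_M_eps using lt1 by auto
qed

lemma M_inv:
  assumes e: "0 < \<epsilon>" "\<epsilon> < \<phi>/(2*(\<phi> + (\<Sum>j\<in>UNIV. d$j)))"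
  shows "pos_invariant d B (M_eps \<epsilon> y)"
  unfolding pos_invariant_def
proof (intro allI impI)
  fix x t assume sol: "sis_solution d B x" and x0: "x 0 \<in> M_eps \<epsilon> y" and t: "0 \<le> (t::real)"
  have x0i: "\<epsilon> * y$i \<le> x 0 $ i" "x 0 $ i \<le> 1" for i using x0 by (auto simp: M_eps_def)
  have bnd: "e' * y$i < x t $ i \<and> x t $ i < 1 + \<delta>" if "0 < e'" "e' < \<epsilon>" "\<delta> > 0" for e' \<delta> i
  proof (rule box_inv[OF ctxD that(1) _ _ sol _ t])
    show "e' < \<phi>/(2*(\<phi> + (\<Sum>j\<in>UNIV. d$j)))" using that e by simp
    show "1 \<le> 1 + \<delta>" using that by simp
    show "\<forall>i. e' * y$i < x 0 $ i \<and> x 0 $ i < 1 + \<delta>"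
    proof
      fix i
      have "e' * y$i < \<epsilon> * y$i" using that y_pos by (simp add: mult_strict_right_mono)
      thus "e' * y$i < x 0 $ i \<and> x 0 $ i < 1 + \<delta>" using x0i[of i] that by linarith
    qed
  qed
  have "\<epsilon> * y$i \<le> x t $ i \<and> x t $ i \<le> 1" for i
  proof
    have "x t $ i \<le> 1 + \<delta>" if "\<delta> > 0" for \<delta>
    proof -
      have "0 < \<epsilon>/2" "\<epsilon>/2 < \<epsilon>" using e by auto
      from bnd[OF this that, of i] show ?thesis by simp
    qed
    thus "x t $ i \<le> 1" by (rule field_le_epsilon)
    show "\<epsilon> * y$i \<le> x t $ i"
    proof (rule ccontr)
      assume "\<not> \<epsilon> * y$i \<le> x t $ i"
      hence lt: "x t $ i / y$i < \<epsilon>" using y_pos by (simp add: pos_divide_less_eq)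
      define e' where "e' = max (\<epsilon>/2) ((x t $ i / y$i + \<epsilon>)/2)"
      have e'12: "0 < e'" "e' < \<epsilon>" using e lt unfolding e'_def by auto
      have "\<forall>r::real. r < \<epsilon> \<longrightarrow> r \<le> (r + \<epsilon>)/2" by auto
      hence "x t $ i / y$i \<le> (x t $ i / y$i + \<epsilon>)/2" using lt by blast
      hence e'3: "x t $ i / y$i \<le> e'" unfolding e'_def by (simp add: le_max_iff_disj)
      note e' = e'12 e'3
      have "e' * y$i < x t $ i" using bnd[OF e'(1,2), of 1 i] by simp
      moreover have "x t $ i \<le> e' * y$i" using e'(3) y_pos by (simp add: pos_divide_le_eq)
      ultimately show False by simp
    qed
  qed
  thus "x t \<in> M_eps \<epsilon> y" by (simp add: M_eps_def)
qed

lemma intM_inv: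
  assumes e: "0 < \<epsilon>" "\<epsilon> < \<phi>/(2*(\<phi> + (\<Sum>j\<in>UNIV. d$j)))"
  shows "pos_invariant d B (interior (M_eps \<epsilon> y))"
  unfolding pos_invariant_def int_M_eps
proof (intro allI impI)
  fix x t assume sol: "sis_solution d B x" and x0: "x 0 \<in> {x. \<forall>i. \<epsilon> * y$i < x$i \<and> x$i < 1}"
    and t: "0 \<le> (t::real)"
  have "\<epsilon> * y$i < x t $ i \<and> x t $ i < 1" for i
    using box_inv[OF ctxD e order_refl sol _ t] x0 by simp
  thus "x t \<in> {x. \<forall>i. \<epsilon> * y$i < x$i \<and> x$i < 1}" by simp
qed

end

theorem lemma4:
  fixes d :: "real^'n" and B :: "real^'n^'n" and y :: "real^'n" and \<phi> :: real
  assumes n2: "CARD('n) \<ge> 2"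
    and d_pos: "\<forall>i. d $ i > 0"
    and B_nonneg: "\<forall>i j. B $ i $ j \<ge> 0"
    and B_irr: "irreducible_mat B"
    and phi_def: "\<phi> = spectral_abscissa (B - diag_mat d)"
    and phi_pos: "\<phi> > 0"
    and y_pos: "\<forall>i. y $ i > 0"
    and y_eig: "(B - diag_mat d) *v y = \<phi> *\<^sub>R y"
    and y_max: "(MAX i. y $ i) = 1"
  shows "\<exists>\<epsilon>0>0. \<forall>\<epsilon>. 0 < \<epsilon> \<and> \<epsilon> < \<epsilon>0 \<and> \<epsilon> < 1 \<longrightarrow>
           (pos_invariant d B (M_eps \<epsilon> y) \<and> pos_invariant d B (interior (M_eps \<epsilon> y)))
         \<and> (\<forall>i. (\<forall>x\<in>P_face \<epsilon> y i. - (sis_field d B x $ i) < 0)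
                \<and> (\<forall>x\<in>Q_face \<epsilon> y i. sis_field d B x $ i < 0))
         \<and> (\<forall>x. sis_solution d B x \<longrightarrow> x 0 \<in> frontier Xi - {0} \<longrightarrow>
                (\<exists>\<kappa>>0. x \<kappa> \<in> M_eps \<epsilon> y))
         \<and> (\<forall>x\<in>Xi - {0}. sis_field d B x = 0 \<longrightarrow> x \<in> interior (M_eps \<epsilon> y))"
proof -
  have row: "\<forall>i. (\<Sum>j\<in>UNIV. B$i$j*y$j) = (\<phi> + d$i)*y$i" using eig_row[OF y_eig] by blast
  have y_le1: "\<forall>i. y $ i \<le> 1"
  proof
    fix i have "y $ i \<le> (MAX i. y $ i)" by (rule Max_ge) auto
    thus "y $ i \<le> 1" using y_max by simp
  qed
  note ctx = d_pos B_nonneg phi_pos y_pos row y_le1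
  define e0 where "e0 = \<phi>/(2*(\<phi> + (\<Sum>j\<in>UNIV. d$j)))"
  have Ds: "(\<Sum>j\<in>UNIV. d$j) \<ge> 0" using d_pos by (simp add: sum_nonneg less_imp_le)
  have e0: "e0 > 0" unfolding e0_def using phi_pos Ds by simp
  have Xi_cbox: "Xi = cbox (0::real^'n) 1" by (auto simp: Xi_def mem_box_cart)
  have clXi: "closed (Xi :: (real^'n) set)" unfolding Xi_cbox by (rule closed_cbox)
  show ?thesis
  proof (rule exI[of _ e0], intro conjI e0 allI impI)
    fix \<epsilon> assume ea: "0 < \<epsilon> \<and> \<epsilon> < e0 \<and> \<epsilon> < 1"
    hence e: "0 < \<epsilon>" "\<epsilon> < \<phi>/(2*(\<phi> + (\<Sum>j\<in>UNIV. d$j)))" unfolding e0_def by auto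
    show "pos_invariant d B (M_eps \<epsilon> y)" by (rule M_inv[OF ctx e])
    show "pos_invariant d B (interior (M_eps \<epsilon> y))" by (rule intM_inv[OF ctx e])
    show "\<forall>x\<in>P_face \<epsilon> y i. - (sis_field d B x $ i) < 0" for i
    proof
      fix x assume xP: "x \<in> P_face \<epsilon> y i"
      hence eq: "x$i = \<epsilon> * y$i" and lo: "\<forall>j. \<epsilon> * y$j \<le> x$j"
        unfolding P_face_def by (auto, metis order_refl)
      have "sis_field d B x $ i \<ge> \<epsilon> * y$i * \<phi>/2" using lowface[OF ctx e eq lo] .
      moreover have "\<epsilon> * y$i * \<phi>/2 > 0" using e y_pos phi_pos by simp
      ultimately show "- (sis_field d B x $ i) < 0" by simp
    qed
    show "\<forall>x\<in>Q_face \<epsilon> y i. sis_field d B x $ i < 0" for i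
    proof
      fix x assume "x \<in> Q_face \<epsilon> y i"
      hence "x$i = 1" unfolding Q_face_def by auto
      hence "sis_field d B x $ i = - d$i" unfolding field_i by simp
      thus "sis_field d B x $ i < 0" using d_pos by simp
    qed
    show "\<exists>\<kappa>>0. x \<kappa> \<in> M_eps \<epsilon> y" if sol: "sis_solution d B x" and fr: "x 0 \<in> frontier Xi - {0}" for x
    proof -
      have x0: "x 0 \<in> Xi" using fr frontier_subset_closed[OF clXi] by auto
      have nz: "x 0 \<noteq> 0" using fr by auto
      show "\<exists>\<kappa>>0. x \<kappa> \<in> M_eps \<epsilon> y" by (rule reach[OF ctx B_irr sol x0 nz e])
    qed
    show "\<forall>x\<in>Xi - {0}. sis_field d B x = 0 \<longrightarrow> x \<in> interior (M_eps \<epsilon> y)"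
    proof (intro ballI impI)
      fix x assume "x \<in> Xi - {0}" "sis_field d B x = 0"
      thus "x \<in> interior (M_eps \<epsilon> y)" using equil[OF ctx B_irr _ _ _ e] by auto
    qed
  qed
qed

end
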